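(* Let $q = 2^m$ and let $C \subseteq \mathbb{F}_q^n$ be a linear code. Then $C$ is GI-reducible if and only if $C \cap C^\perp = \{0\}$ (with respect to the standard inner product).
   Context: Vectors are row vectors; $I$ and $J$ are the $n\times n$ identity and all-ones matrices. For symmetric $M$, a code $C$ is $M$-LCD if $GMG^T$ is nonsingular for a generator matrix $G$ of $C$, and then $\Pi_{C,M} := MG^T(GMG^T)^{-1}G$. Codes $C_1,C_2$ are permutation-equivalent ($C_1\cong C_2$) if $C_2 = C_1P$ for a permutation matrix $P$; matrices satisfy $A_1 \cong A_2$ if $A_2 = P^TA_1P$ for a permutation matrix $P$. A code $C$ is GI-reducible if there is a nondegenerate $M = aI + bJ$ ($a,b\in\mathbb{F}_q$, $a\neq0$, $a+nb\neq0$) such that every code $CP$ ($P$ a permutation matrix) is $M$-LCD and, for all $C_1, C_2 \in \{CP\}$, $C_1\cong C_2 \iff \Pi_{C_1,M}\cong\Pi_{C_2,M}$. *)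

theory Defs
  imports "Jordan_Normal_Form.Gauss_Jordan_Elimination" "Jordan_Normal_Form.Determinant"
begin

text \<open>Vectors of length n are JNF vectors in carrier_vec n, viewed as row vectors:
  the row vector c times the matrix A is transpose_mat A *v c.\<close>

definition linear_code :: "nat \<Rightarrow> 'a::field vec set \<Rightarrow> bool" where
  "linear_code n C \<longleftrightarrow> C \<subseteq> carrier_vec n \<and> 0\<^sub>v n \<in> C \<and>
     (\<forall>x\<in>C. \<forall>y\<in>C. x + y \<in> C) \<and> (\<forall>a. \<forall>x\<in>C. a \<cdot>\<^sub>v x \<in> C)"

definition dual_code :: "nat \<Rightarrow> 'a::field vec set \<Rightarrow> 'a vec set" where
  "dual_code n C = {v \<in> carrier_vec n. \<forall>c\<in>C. v \<bullet> c = 0}"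

definition gen_mat :: "nat \<Rightarrow> 'a::field vec set \<Rightarrow> 'a mat \<Rightarrow> bool" where
  "gen_mat n C G \<longleftrightarrow> G \<in> carrier_mat (dim_row G) n \<and>
     C = {transpose_mat G *\<^sub>v x | x. x \<in> carrier_vec (dim_row G)} \<and>
     (\<forall>x\<in>carrier_vec (dim_row G). transpose_mat G *\<^sub>v x = 0\<^sub>v n \<longrightarrow> x = 0\<^sub>v (dim_row G))"

definition M_LCD :: "nat \<Rightarrow> 'a::field mat \<Rightarrow> 'a vec set \<Rightarrow> bool" where
  "M_LCD n M C \<longleftrightarrow> (\<exists>G. gen_mat n C G \<and> det (G * M * transpose_mat G) \<noteq> 0)"

definition Pi_mat :: "nat \<Rightarrow> 'a::field mat \<Rightarrow> 'a vec set \<Rightarrow> 'a mat" where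
  "Pi_mat n M C = (let G = (SOME G. gen_mat n C G \<and> det (G * M * transpose_mat G) \<noteq> 0)
     in M * transpose_mat G * the (mat_inverse (G * M * transpose_mat G)) * G)"

definition perm_mat :: "nat \<Rightarrow> 'a::semiring_1 mat \<Rightarrow> bool" where
  "perm_mat n P \<longleftrightarrow> (\<exists>\<sigma>. \<sigma> permutes {..<n} \<and>
     P = mat n n (\<lambda>(i,j). if \<sigma> i = j then 1 else 0))"

definition code_perm :: "'a::semiring_1 vec set \<Rightarrow> 'a mat \<Rightarrow> 'a vec set" where
  "code_perm C P = (\<lambda>c. transpose_mat P *\<^sub>v c) ` C"

definition code_equiv :: "nat \<Rightarrow> 'a::semiring_1 vec set \<Rightarrow> 'a vec set \<Rightarrow> bool" where
  "code_equiv n C1 C2 \<longleftrightarrow> (\<exists>P. perm_mat n P \<and> C2 = code_perm C1 P)"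

definition mat_equiv :: "nat \<Rightarrow> 'a::semiring_1 mat \<Rightarrow> 'a mat \<Rightarrow> bool" where
  "mat_equiv n A1 A2 \<longleftrightarrow> (\<exists>P. perm_mat n P \<and> A2 = transpose_mat P * A1 * P)"

definition GI_reducible :: "nat \<Rightarrow> 'a::field vec set \<Rightarrow> bool" where
  "GI_reducible n C \<longleftrightarrow> (\<exists>a b. a \<noteq> 0 \<and> a + of_nat n * b \<noteq> 0 \<and>
     (let M = a \<cdot>\<^sub>m 1\<^sub>m n + b \<cdot>\<^sub>m mat n n (\<lambda>_. 1) in
       (\<forall>P. perm_mat n P \<longrightarrow> M_LCD n M (code_perm C P)) \<and>
       (\<forall>C1 C2. C1 \<in> {code_perm C P | P. perm_mat n P} \<longrightarrow> C2 \<in> {code_perm C P | P. perm_mat n P} \<longrightarrow>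
          (code_equiv n C1 C2 \<longleftrightarrow> mat_equiv n (Pi_mat n M C1) (Pi_mat n M C2)))))"

end

theory Submission
  imports Defs "HOL-Number_Theory.Residues"
begin



lemma char2:
  assumes "card (UNIV :: 'a::{finite,field} set) = 2 ^ m"
  shows "(2::'a) = 0"
proof -
  have pos: "CHAR('a) > 0" using finite_imp_CHAR_pos[where 'a='a] by simp
  have pr: "prime CHAR('a)" using prime_CHAR_semidom[OF pos] .
  have "CHAR('a) dvd 2 ^ m" using CHAR_dvd_CARD[where 'a='a] assms by simp
  then have d: "CHAR('a) dvd 2" using pr prime_dvd_power by blast
  have "CHAR('a) \<noteq> 1" using pr by auto
  then have "CHAR('a) = 2" using d two_is_prime_nat[unfolded prime_nat_iff] by blast
  then show ?thesis using of_nat_CHAR[where 'a='a] by simp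
qed

lemma sum_sq_char2:
  fixes f :: "nat \<Rightarrow> 'a::field"
  assumes "(2::'a) = 0"
  shows "(\<Sum>j\<in>A. f j * f j) = (\<Sum>j\<in>A. f j) * (\<Sum>j\<in>A. f j)"
proof (induction A rule: infinite_finite_induct)
  case (insert x F)
  have e: "(f x + s) * (f x + s) = f x * f x + s * s + 2 * (f x * s)" for s :: 'a
    by (simp add: algebra_simps)
  show ?case using insert assms by (simp add: e)
qed auto

definition pm :: "nat \<Rightarrow> (nat \<Rightarrow> nat) \<Rightarrow> 'a::semiring_1 mat" where
  "pm n \<sigma> = mat n n (\<lambda>(i,j). if \<sigma> i = j then 1 else 0)"

lemma pm_carrier: "pm n \<sigma> \<in> carrier_mat n n"
  by (simp add: pm_def)

lemma pm_transpose:
  assumes "\<sigma> permutes {..<n}"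
  shows "transpose_mat (pm n \<sigma>) = (pm n (Hilbert_Choice.inv \<sigma>) :: 'a::semiring_1 mat)"
  by (rule eq_matI) (auto simp: pm_def permutes_inv_eq[OF assms])

lemma pm_vec:
  assumes p: "\<sigma> permutes {..<n}" and u: "u \<in> carrier_vec n"
  shows "pm n \<sigma> *\<^sub>v u = vec n (\<lambda>i. u $ \<sigma> i)"
proof (rule eq_vecI)
  fix i assume "i < dim_vec (vec n (\<lambda>i. u $ \<sigma> i))"
  then have i: "i < n" by simp
  have si: "\<sigma> i < n" using permutes_in_image[OF p, of i] i by auto
  have "(pm n \<sigma> *\<^sub>v u) $ i = (\<Sum>j\<in>{0..<n}. (if \<sigma> i = j then 1 else 0) * u $ j)"
    using i u by (simp add: pm_def scalar_prod_def)
  also have "\<dots> = (\<Sum>j\<in>{0..<n}. (if \<sigma> i = j then u $ j else 0))"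
    by (rule sum.cong) auto
  also have "\<dots> = u $ \<sigma> i" using si by (simp add: sum.delta)
  finally show "(pm n \<sigma> *\<^sub>v u) $ i = vec n (\<lambda>i. u $ \<sigma> i) $ i" using i by simp
qed (simp add: pm_def)

lemma perm_matE:
  assumes "perm_mat n P"
  obtains \<sigma> where "\<sigma> permutes {..<n}" "P = pm n \<sigma>"
  using assms unfolding perm_mat_def pm_def by blast

lemma perm_props:
  fixes P :: "'a::comm_ring_1 mat"
  assumes "perm_mat n P"
  shows "P \<in> carrier_mat n n"
    and "\<And>u. u \<in> carrier_vec n \<Longrightarrow> transpose_mat P *\<^sub>v (P *\<^sub>v u) = u"
    and "\<And>u. u \<in> carrier_vec n \<Longrightarrow> P *\<^sub>v (transpose_mat P *\<^sub>v u) = u"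
    and "\<And>u v. u \<in> carrier_vec n \<Longrightarrow> v \<in> carrier_vec n \<Longrightarrow>
          (transpose_mat P *\<^sub>v u) \<bullet> (transpose_mat P *\<^sub>v v) = u \<bullet> v"
proof -
  obtain \<sigma> where p: "\<sigma> permutes {..<n}" and P: "P = pm n \<sigma>" using assms perm_matE by blast
  have pi: "Hilbert_Choice.inv \<sigma> permutes {..<n}" using permutes_inv[OF p] .
  have lt: "\<And>i. i < n \<Longrightarrow> \<sigma> i < n" using permutes_in_image[OF p] by auto
  have lti: "\<And>i. i < n \<Longrightarrow> Hilbert_Choice.inv \<sigma> i < n" using permutes_in_image[OF pi] by auto
  have T: "transpose_mat P = pm n (Hilbert_Choice.inv \<sigma>)" using pm_transpose[OF p] P by simp
  show "P \<in> carrier_mat n n" using P pm_carrier by simp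
  show "transpose_mat P *\<^sub>v (P *\<^sub>v u) = u" if u: "u \<in> carrier_vec n" for u
  proof -
    have "P *\<^sub>v u = vec n (\<lambda>i. u $ \<sigma> i)" using pm_vec[OF p u] P by simp
    moreover have "vec n (\<lambda>i. u $ \<sigma> i) \<in> carrier_vec n" by simp
    ultimately have "transpose_mat P *\<^sub>v (P *\<^sub>v u) = vec n (\<lambda>j. vec n (\<lambda>i. u $ \<sigma> i) $ Hilbert_Choice.inv \<sigma> j)"
      using pm_vec[OF pi, of "vec n (\<lambda>i. u $ \<sigma> i)"] T by simp
    also have "\<dots> = u" using u lti by (intro eq_vecI) (auto simp: permutes_inverses[OF p])
    finally show ?thesis .
  qed
  show "P *\<^sub>v (transpose_mat P *\<^sub>v u) = u" if u: "u \<in> carrier_vec n" for u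
  proof -
    have "transpose_mat P *\<^sub>v u = vec n (\<lambda>i. u $ Hilbert_Choice.inv \<sigma> i)" using pm_vec[OF pi u] T by simp
    moreover have "vec n (\<lambda>i. u $ Hilbert_Choice.inv \<sigma> i) \<in> carrier_vec n" by simp
    ultimately have "P *\<^sub>v (transpose_mat P *\<^sub>v u) = vec n (\<lambda>j. vec n (\<lambda>i. u $ Hilbert_Choice.inv \<sigma> i) $ \<sigma> j)"
      using pm_vec[OF p, of "vec n (\<lambda>i. u $ Hilbert_Choice.inv \<sigma> i)"] P by simp
    also have "\<dots> = u" using u lt by (intro eq_vecI) (auto simp: permutes_inverses[OF p])
    finally show ?thesis .
  qed
  show "(transpose_mat P *\<^sub>v u) \<bullet> (transpose_mat P *\<^sub>v v) = u \<bullet> v"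
    if u: "u \<in> carrier_vec n" and v: "v \<in> carrier_vec n" for u v
  proof -
    have "(transpose_mat P *\<^sub>v u) \<bullet> (transpose_mat P *\<^sub>v v)
        = vec n (\<lambda>i. u $ Hilbert_Choice.inv \<sigma> i) \<bullet> vec n (\<lambda>i. v $ Hilbert_Choice.inv \<sigma> i)"
      using pm_vec[OF pi u] pm_vec[OF pi v] T by simp
    also have "\<dots> = (\<Sum>i\<in>{0..<n}. u $ Hilbert_Choice.inv \<sigma> i * v $ Hilbert_Choice.inv \<sigma> i)"
      by (simp add: scalar_prod_def)
    also have "\<dots> = (\<Sum>i\<in>{0..<n}. u $ i * v $ i)"
      using sum.reindex_bij_betw[OF permutes_imp_bij[OF pi], of "\<lambda>i. u $ i * v $ i"]
      by (simp add: atLeast0LessThan)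
    also have "\<dots> = u \<bullet> v" using v by (simp add: scalar_prod_def)
    finally show ?thesis .
  qed
qed

lemma perm_id: "perm_mat n (1\<^sub>m n :: 'a::semiring_1 mat)"
  unfolding perm_mat_def by (rule exI[of _ id]) (auto intro!: eq_matI)

lemma code_perm_id:
  assumes "linear_code n C"
  shows "code_perm C (1\<^sub>m n) = C"
proof -
  have "C \<subseteq> carrier_vec n" using assms by (simp add: linear_code_def)
  then show ?thesis unfolding code_perm_def by force
qed




definition is_proj :: "nat \<Rightarrow> 'a::field vec set \<Rightarrow> 'a mat \<Rightarrow> bool" where
  "is_proj n D A \<longleftrightarrow> A \<in> carrier_mat n n \<and>
     (\<forall>u\<in>carrier_vec n. A *\<^sub>v u \<in> D \<and> u - A *\<^sub>v u \<in> dual_code n D)"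

lemma lin_carrier: "linear_code n D \<Longrightarrow> D \<subseteq> carrier_vec n"
  by (simp add: linear_code_def)

lemma lin_sub:
  assumes L: "linear_code n D" and x: "x \<in> D" and y: "y \<in> D"
  shows "x - y \<in> D"
proof -
  have xc: "x \<in> carrier_vec n" and yc: "y \<in> carrier_vec n" using L x y lin_carrier by auto
  have "x - y = x + (-1) \<cdot>\<^sub>v y" using xc yc by (intro eq_vecI) auto
  moreover have "(-1) \<cdot>\<^sub>v y \<in> D" using L y by (simp add: linear_code_def)
  ultimately show ?thesis using L x by (simp add: linear_code_def)
qed

lemma dual_sub:
  assumes L: "linear_code n D" and x: "x \<in> dual_code n D" and y: "y \<in> dual_code n D"
  shows "x - y \<in> dual_code n D"
proof -
  have xc: "x \<in> carrier_vec n" and yc: "y \<in> carrier_vec n" using x y by (auto simp: dual_code_def)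
  have "(x - y) \<bullet> c = 0" if c: "c \<in> D" for c
  proof -
    have cc: "c \<in> carrier_vec n" using c L lin_carrier by auto
    have "(x - y) \<bullet> c = x \<bullet> c - y \<bullet> c" using minus_scalar_prod_distrib[OF xc yc cc] .
    then show ?thesis using x y c by (simp add: dual_code_def)
  qed
  then show ?thesis using xc yc by (simp add: dual_code_def)
qed

lemma minus_zero_eq:
  fixes x y :: "'a::ab_group_add vec"
  assumes x: "x \<in> carrier_vec n" and y: "y \<in> carrier_vec n" and e: "x - y = 0\<^sub>v n"
  shows "x = y"
proof (rule eq_vecI)
  fix i assume "i < dim_vec y"
  then have i: "i < n" using y by auto
  have "(x - y) $ i = (0\<^sub>v n :: 'a vec) $ i" using e by simp
  then show "x $ i = y $ i" using i x y by simp
qed (use x y in auto)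

lemma sub_sub:
  fixes x y z :: "'a::ab_group_add vec"
  assumes x: "x \<in> carrier_vec n" and y: "y \<in> carrier_vec n" and z: "z \<in> carrier_vec n"
  shows "(z - y) - (z - x) = x - y"
  using x y z by (intro eq_vecI) auto

lemma mat_eq_by_vec:
  fixes A B :: "'a::comm_ring_1 mat"
  assumes A: "A \<in> carrier_mat n n" and B: "B \<in> carrier_mat n n"
    and e: "\<And>u::'a vec. u \<in> carrier_vec n \<Longrightarrow> A *\<^sub>v u = B *\<^sub>v u"
  shows "A = B"
proof (rule eq_matI)
  fix i j assume i: "i < dim_row B" and j: "j < dim_col B"
  then have i': "i < n" and j': "j < n" using B by auto
  have "A $$ (i,j) = (A *\<^sub>v unit_vec n j) $ i" using A i' j' by simp
  also have "\<dots> = (B *\<^sub>v unit_vec n j) $ i" using e[of "unit_vec n j"] by simp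
  also have "\<dots> = B $$ (i,j)" using B i' j' by simp
  finally show "A $$ (i,j) = B $$ (i,j)" .
qed (use A B in auto)

lemma proj_unique:
  assumes L: "linear_code n D" and lcd: "D \<inter> dual_code n D = {0\<^sub>v n}"
    and A: "is_proj n D A" and B: "is_proj n D B"
  shows "A = B"
proof (rule mat_eq_by_vec[of _ n])
  show "A \<in> carrier_mat n n" "B \<in> carrier_mat n n" using A B by (auto simp: is_proj_def)
  fix u :: "'a vec" assume u: "u \<in> carrier_vec n"
  have Ac: "A *\<^sub>v u \<in> carrier_vec n" and Bc: "B *\<^sub>v u \<in> carrier_vec n"
    using A B u by (auto simp: is_proj_def)
  have d1: "A *\<^sub>v u - B *\<^sub>v u \<in> D" using lin_sub[OF L] A B u by (auto simp: is_proj_def)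
  have "(u - B *\<^sub>v u) - (u - A *\<^sub>v u) \<in> dual_code n D"
    using dual_sub[OF L] A B u by (auto simp: is_proj_def)
  moreover have "(u - B *\<^sub>v u) - (u - A *\<^sub>v u) = A *\<^sub>v u - B *\<^sub>v u"
    using sub_sub[OF Ac Bc u] .
  ultimately have "A *\<^sub>v u - B *\<^sub>v u = 0\<^sub>v n" using d1 lcd by auto
  then show "A *\<^sub>v u = B *\<^sub>v u" using minus_zero_eq[OF Ac Bc] by blast
qed

lemma proj_range:
  assumes L: "linear_code n D" and lcd: "D \<inter> dual_code n D = {0\<^sub>v n}"
    and A: "is_proj n D A"
  shows "D = {A *\<^sub>v u | u. u \<in> carrier_vec n}"
proof
  show "{A *\<^sub>v u | u. u \<in> carrier_vec n} \<subseteq> D" using A by (auto simp: is_proj_def)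
  show "D \<subseteq> {A *\<^sub>v u | u. u \<in> carrier_vec n}"
  proof
    fix c assume c: "c \<in> D"
    have cc: "c \<in> carrier_vec n" using c L lin_carrier by auto
    have Ac: "A *\<^sub>v c \<in> carrier_vec n" using A cc by (auto simp: is_proj_def)
    have "c - A *\<^sub>v c \<in> D" using lin_sub[OF L c] A cc by (auto simp: is_proj_def)
    moreover have "c - A *\<^sub>v c \<in> dual_code n D" using A cc by (auto simp: is_proj_def)
    ultimately have "c - A *\<^sub>v c = 0\<^sub>v n" using lcd by auto
    then have "c = A *\<^sub>v c" using minus_zero_eq[OF cc Ac] by blast
    then show "c \<in> {A *\<^sub>v u | u. u \<in> carrier_vec n}" using cc by blast
  qed
qed

lemma code_perm_linear:
  assumes P: "perm_mat n P" and L: "linear_code n D"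
  shows "linear_code n (code_perm D P)"
proof -
  have Pc: "transpose_mat P \<in> carrier_mat n n" using perm_props(1)[OF P] by simp
  have Dc: "D \<subseteq> carrier_vec n" using L lin_carrier by auto
  show ?thesis unfolding linear_code_def code_perm_def
  proof (intro conjI ballI allI)
    show "(\<lambda>c. transpose_mat P *\<^sub>v c) ` D \<subseteq> carrier_vec n" using Pc Dc by auto
    have "transpose_mat P *\<^sub>v 0\<^sub>v n = 0\<^sub>v n" using Pc by (intro eq_vecI) auto
    then show "0\<^sub>v n \<in> (\<lambda>c. transpose_mat P *\<^sub>v c) ` D" using L
      by (metis image_eqI linear_code_def)
    fix x y assume x: "x \<in> (\<lambda>c. transpose_mat P *\<^sub>v c) ` D" and y: "y \<in> (\<lambda>c. transpose_mat P *\<^sub>v c) ` D"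
    then obtain x' y' where x': "x' \<in> D" "x = transpose_mat P *\<^sub>v x'" and y': "y' \<in> D" "y = transpose_mat P *\<^sub>v y'"
      by auto
    have x'c: "x' \<in> carrier_vec n" and y'c: "y' \<in> carrier_vec n" using x' y' Dc by auto
    have "x + y = transpose_mat P *\<^sub>v (x' + y')"
      using mult_add_distrib_mat_vec[OF Pc x'c y'c] x' y' by simp
    moreover have "x' + y' \<in> D" using L x' y' by (simp add: linear_code_def)
    ultimately show "x + y \<in> (\<lambda>c. transpose_mat P *\<^sub>v c) ` D" by blast
  next
    fix a x assume x: "x \<in> (\<lambda>c. transpose_mat P *\<^sub>v c) ` D"
    then obtain x' where x': "x' \<in> D" "x = transpose_mat P *\<^sub>v x'" by auto
    have x'c: "x' \<in> carrier_vec n" using x' Dc by auto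
    have "a \<cdot>\<^sub>v x = transpose_mat P *\<^sub>v (a \<cdot>\<^sub>v x')"
      using mult_mat_vec[OF Pc x'c, of a] x' by simp
    moreover have "a \<cdot>\<^sub>v x' \<in> D" using L x' by (simp add: linear_code_def)
    ultimately show "a \<cdot>\<^sub>v x \<in> (\<lambda>c. transpose_mat P *\<^sub>v c) ` D" by blast
  qed
qed

lemma dual_perm:
  assumes P: "perm_mat n P" and L: "linear_code n D" and w: "w \<in> dual_code n D"
  shows "transpose_mat P *\<^sub>v w \<in> dual_code n (code_perm D P)"
proof -
  have Pc: "transpose_mat P \<in> carrier_mat n n" using perm_props(1)[OF P] by simp
  have wc: "w \<in> carrier_vec n" using w by (simp add: dual_code_def)
  have "(transpose_mat P *\<^sub>v w) \<bullet> (transpose_mat P *\<^sub>v c) = 0" if c: "c \<in> D" for c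
    using perm_props(4)[OF P wc, of c] c L lin_carrier w by (auto simp: dual_code_def)
  then show ?thesis using Pc wc by (auto simp: dual_code_def code_perm_def)
qed

lemma code_perm_lcd:
  assumes P: "perm_mat n P" and L: "linear_code n D" and lcd: "D \<inter> dual_code n D = {0\<^sub>v n}"
  shows "code_perm D P \<inter> dual_code n (code_perm D P) = {0\<^sub>v n}"
proof -
  have L': "linear_code n (code_perm D P)" using code_perm_linear[OF P L] .
  have Dc: "D \<subseteq> carrier_vec n" using L lin_carrier by auto
  have "v = 0\<^sub>v n" if v1: "v \<in> code_perm D P" and v2: "v \<in> dual_code n (code_perm D P)" for v
  proof -
    obtain c where c: "c \<in> D" "v = transpose_mat P *\<^sub>v c" using v1 by (auto simp: code_perm_def)
    have cc: "c \<in> carrier_vec n" using c Dc by auto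
    have "c \<bullet> c2 = 0" if c2: "c2 \<in> D" for c2
    proof -
      have "c \<bullet> c2 = v \<bullet> (transpose_mat P *\<^sub>v c2)" using perm_props(4)[OF P cc, of c2] c c2 Dc by auto
      also have "\<dots> = 0" using v2 c2 by (auto simp: dual_code_def code_perm_def)
      finally show ?thesis .
    qed
    then have "c \<in> dual_code n D" using cc by (simp add: dual_code_def)
    then have "c = 0\<^sub>v n" using c lcd by auto
    then show ?thesis using c perm_props(1)[OF P] by (intro eq_vecI) auto
  qed
  moreover have "0\<^sub>v n \<in> code_perm D P" using L' by (simp add: linear_code_def)
  moreover have "0\<^sub>v n \<in> dual_code n (code_perm D P)"
    using lin_carrier[OF L'] by (force simp: dual_code_def)
  ultimately show ?thesis by blast
qed

lemma proj_perm:
  assumes P: "perm_mat n P" and L: "linear_code n D" and A: "is_proj n D A"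
  shows "is_proj n (code_perm D P) (transpose_mat P * A * P)"
proof -
  have Pc: "P \<in> carrier_mat n n" using perm_props(1)[OF P] .
  have PTc: "transpose_mat P \<in> carrier_mat n n" using Pc by simp
  have Ac: "A \<in> carrier_mat n n" using A by (simp add: is_proj_def)
  have eq: "(transpose_mat P * A * P) *\<^sub>v u = transpose_mat P *\<^sub>v (A *\<^sub>v (P *\<^sub>v u))"
    if u: "(u::'a vec) \<in> carrier_vec n" for u
    using Pc PTc Ac u by (simp add: assoc_mult_mat_vec[of _ n n _ n])
  show ?thesis unfolding is_proj_def
  proof (intro conjI ballI)
    show "transpose_mat P * A * P \<in> carrier_mat n n" using Pc PTc Ac by auto
    fix u :: "'a vec" assume u: "u \<in> carrier_vec n"
    have Pu: "P *\<^sub>v u \<in> carrier_vec n" using Pc u by auto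
    have APu: "A *\<^sub>v (P *\<^sub>v u) \<in> carrier_vec n" using Ac Pu by auto
    show "(transpose_mat P * A * P) *\<^sub>v u \<in> code_perm D P"
      unfolding eq[OF u] code_perm_def using A Pu by (auto simp: is_proj_def)
    have "u - (transpose_mat P * A * P) *\<^sub>v u = transpose_mat P *\<^sub>v (P *\<^sub>v u - A *\<^sub>v (P *\<^sub>v u))"
      unfolding eq[OF u] mult_minus_distrib_mat_vec[OF PTc Pu APu] perm_props(2)[OF P u] ..
    moreover have "P *\<^sub>v u - A *\<^sub>v (P *\<^sub>v u) \<in> dual_code n D" using A Pu by (auto simp: is_proj_def)
    ultimately show "u - (transpose_mat P * A * P) *\<^sub>v u \<in> dual_code n (code_perm D P)"
      using dual_perm[OF P L] by simp
  qed
qed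




definition good :: "nat \<Rightarrow> 'a::field vec set \<Rightarrow> nat \<Rightarrow> 'a mat \<Rightarrow> bool" where
  "good n D k H \<longleftrightarrow> H \<in> carrier_mat n k \<and> (\<forall>x\<in>carrier_vec k. H *\<^sub>v x \<in> D) \<and>
     (\<forall>x\<in>carrier_vec k. H *\<^sub>v x = 0\<^sub>v n \<longrightarrow> x = 0\<^sub>v k)"

lemma card_carrier_vec: "card (carrier_vec k :: 'a::finite vec set) = card (UNIV :: 'a set) ^ k"
proof -
  have "bij_betw list_of_vec (carrier_vec k :: 'a vec set) {xs. set xs \<subseteq> UNIV \<and> length xs = k}"
    unfolding bij_betw_def
  proof
    show "inj_on list_of_vec (carrier_vec k :: 'a vec set)"
    proof (rule inj_onI)
      fix x y :: "'a vec" assume "list_of_vec x = list_of_vec y"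
      then have "vec_of_list (list_of_vec x) = vec_of_list (list_of_vec y)" by simp
      then show "x = y" by (simp only: vec_list)
    qed
    show "list_of_vec ` carrier_vec k = {xs :: 'a list. set xs \<subseteq> UNIV \<and> length xs = k}"
    proof
      show "list_of_vec ` carrier_vec k \<subseteq> {xs :: 'a list. set xs \<subseteq> UNIV \<and> length xs = k}"
      proof
        fix xs assume "xs \<in> list_of_vec ` (carrier_vec k :: 'a vec set)"
        then obtain v :: "'a vec" where v: "v \<in> carrier_vec k" "xs = list_of_vec v" by blast
        then have "length xs = k" by simp
        then show "xs \<in> {xs :: 'a list. set xs \<subseteq> UNIV \<and> length xs = k}" by simp
      qed
      show "{xs :: 'a list. set xs \<subseteq> UNIV \<and> length xs = k} \<subseteq> list_of_vec ` carrier_vec k"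
      proof
        fix xs :: "'a list" assume "xs \<in> {xs. set xs \<subseteq> UNIV \<and> length xs = k}"
        then have "length xs = k" by simp
        then have "vec_of_list xs \<in> carrier_vec k" unfolding carrier_vec_def by simp
        moreover have "xs = list_of_vec (vec_of_list xs)" by (simp only: list_vec)
        ultimately show "xs \<in> list_of_vec ` carrier_vec k" by (rule rev_image_eqI)
      qed
    qed
  qed
  then have "card (carrier_vec k :: 'a vec set) = card {xs :: 'a list. set xs \<subseteq> UNIV \<and> length xs = k}"
    by (rule bij_betw_same_card)
  also have "\<dots> = card (UNIV :: 'a set) ^ k" by (rule card_lists_length_eq) simp
  finally show ?thesis .
qed

lemma card_field_gt1: "1 < card (UNIV :: 'a::{finite,field} set)"
proof -
  have "card {0::'a, 1} \<le> card (UNIV :: 'a set)" by (rule card_mono) (rule finite_UNIV, rule subset_UNIV)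
  then show ?thesis by simp
qed

lemma vec_diff_zero:
  fixes x y :: "'a::ring vec"
  assumes H: "H \<in> carrier_mat n k" and x: "x \<in> carrier_vec k" and y: "y \<in> carrier_vec k"
  shows "H *\<^sub>v (x - y) = H *\<^sub>v x - H *\<^sub>v y"
  using mult_minus_distrib_mat_vec[OF H x y] .

lemma good_bound:
  fixes D :: "'a::{finite,field} vec set"
  assumes g: "good n D k H"
  shows "k \<le> n"
proof -
  have H: "H \<in> carrier_mat n k" using g by (simp add: good_def)
  have inj: "inj_on (\<lambda>x. H *\<^sub>v x) (carrier_vec k)"
  proof (rule inj_onI)
    fix x y :: "'a vec" assume x: "x \<in> carrier_vec k" and y: "y \<in> carrier_vec k" and e: "H *\<^sub>v x = H *\<^sub>v y"
    have Hx: "H *\<^sub>v x \<in> carrier_vec n" and Hy: "H *\<^sub>v y \<in> carrier_vec n" using H x y by auto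
    have "H *\<^sub>v (x - y) = H *\<^sub>v x - H *\<^sub>v y" using vec_diff_zero[OF H x y] .
    also have "\<dots> = 0\<^sub>v n" using e Hy by (intro eq_vecI) auto
    finally have "x - y = 0\<^sub>v k" using g x y by (simp add: good_def)
    then show "x = y" using minus_zero_eq[OF x y] by blast
  qed
  have "card (carrier_vec n :: 'a vec set) > 0"
    unfolding card_carrier_vec using card_field_gt1[where 'a='a] by simp
  then have fin: "finite (carrier_vec n :: 'a vec set)" by (rule card_ge_0_finite)
  have "card (carrier_vec k :: 'a vec set) \<le> card (carrier_vec n :: 'a vec set)"
    by (rule card_inj_on_le[OF inj _ fin]) (use H in auto)
  then have "card (UNIV :: 'a set) ^ k \<le> card (UNIV :: 'a set) ^ n" by (simp add: card_carrier_vec)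
  then show ?thesis using power_le_imp_le_exp card_field_gt1[where 'a='a] by blast
qed



definition ext_mat :: "nat \<Rightarrow> nat \<Rightarrow> 'a mat \<Rightarrow> 'a vec \<Rightarrow> 'a mat" where
  "ext_mat n k H d = mat n (Suc k) (\<lambda>(i,j). if j < k then H $$ (i,j) else d $ i)"

lemma ext_mat_vec:
  fixes H :: "'a::field mat"
  assumes H: "H \<in> carrier_mat n k" and d: "d \<in> carrier_vec n" and x: "x \<in> carrier_vec (Suc k)"
  shows "ext_mat n k H d *\<^sub>v x = H *\<^sub>v vec k (\<lambda>j. x $ j) + x $ k \<cdot>\<^sub>v d"
proof (rule eq_vecI)
  fix i assume "i < dim_vec (H *\<^sub>v vec k (\<lambda>j. x $ j) + x $ k \<cdot>\<^sub>v d)"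
  then have i: "i < n" using d by simp
  have "(ext_mat n k H d *\<^sub>v x) $ i = (\<Sum>j\<in>{0..<Suc k}. (if j < k then H $$ (i,j) else d $ i) * x $ j)"
    using i x by (simp add: ext_mat_def scalar_prod_def)
  also have "\<dots> = (\<Sum>j\<in>{0..<k}. (if j < k then H $$ (i,j) else d $ i) * x $ j) + d $ i * x $ k"
    by simp
  also have "(\<Sum>j\<in>{0..<k}. (if j < k then H $$ (i,j) else d $ i) * x $ j) = (\<Sum>j\<in>{0..<k}. H $$ (i,j) * x $ j)"
    by (rule sum.cong) auto
  also have "(\<Sum>j\<in>{0..<k}. H $$ (i,j) * x $ j) = (H *\<^sub>v vec k (\<lambda>j. x $ j)) $ i"
    using i H by (simp add: scalar_prod_def)
  finally show "(ext_mat n k H d *\<^sub>v x) $ i = (H *\<^sub>v vec k (\<lambda>j. x $ j) + x $ k \<cdot>\<^sub>v d) $ i"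
    using i d H by (simp add: mult.commute)
qed (use H d in \<open>auto simp: ext_mat_def\<close>)

lemma good_extend:
  fixes D :: "'a::field vec set"
  assumes L: "linear_code n D" and g: "good n D k H" and dD: "d \<in> D"
    and dn: "d \<notin> {H *\<^sub>v x | x. x \<in> carrier_vec k}"
  shows "good n D (Suc k) (ext_mat n k H d)"
proof -
  have H: "H \<in> carrier_mat n k" using g by (simp add: good_def)
  have d: "d \<in> carrier_vec n" using dD L lin_carrier by auto
  show ?thesis unfolding good_def
  proof (intro conjI ballI impI)
    show "ext_mat n k H d \<in> carrier_mat n (Suc k)" by (simp add: ext_mat_def)
    fix x :: "'a vec" assume x: "x \<in> carrier_vec (Suc k)"
    let ?x' = "vec k (\<lambda>j. x $ j)"
    have x': "?x' \<in> carrier_vec k" by simp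
    have e: "ext_mat n k H d *\<^sub>v x = H *\<^sub>v ?x' + x $ k \<cdot>\<^sub>v d" using ext_mat_vec[OF H d x] .
    have "H *\<^sub>v ?x' \<in> D" using g x' by (simp add: good_def)
    moreover have "x $ k \<cdot>\<^sub>v d \<in> D" using L dD by (simp add: linear_code_def)
    ultimately show "ext_mat n k H d *\<^sub>v x \<in> D" unfolding e using L by (simp add: linear_code_def)
    assume z: "ext_mat n k H d *\<^sub>v x = 0\<^sub>v n"
    have comp: "(H *\<^sub>v ?x') $ i + x $ k * d $ i = 0" if i: "i < n" for i
    proof -
      have "(H *\<^sub>v ?x' + x $ k \<cdot>\<^sub>v d) $ i = (0\<^sub>v n :: 'a vec) $ i" using z e by simp
      then show ?thesis using i H d by simp
    qed
    have xk: "x $ k = 0"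
    proof (rule ccontr)
      assume nz: "x $ k \<noteq> 0"
      have "d = H *\<^sub>v ((- 1 / x $ k) \<cdot>\<^sub>v ?x')"
      proof (rule eq_vecI)
        fix i assume "i < dim_vec (H *\<^sub>v ((- 1 / x $ k) \<cdot>\<^sub>v ?x'))"
        then have i: "i < n" using H by simp
        have "H *\<^sub>v ((- 1 / x $ k) \<cdot>\<^sub>v ?x') = (- 1 / x $ k) \<cdot>\<^sub>v (H *\<^sub>v ?x')"
          using mult_mat_vec[OF H x'] .
        then have "(H *\<^sub>v ((- 1 / x $ k) \<cdot>\<^sub>v ?x')) $ i = (- 1 / x $ k) * (H *\<^sub>v ?x') $ i"
          using i H by simp
        also have "(H *\<^sub>v ?x') $ i = - (x $ k * d $ i)"
          using comp[OF i] by (simp add: eq_neg_iff_add_eq_0)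
        also have "(- 1 / x $ k) * (- (x $ k * d $ i)) = d $ i" using nz by (simp add: field_simps)
        finally show "d $ i = (H *\<^sub>v ((- 1 / x $ k) \<cdot>\<^sub>v ?x')) $ i" by simp
      qed (use H d in auto)
      moreover have "(- 1 / x $ k) \<cdot>\<^sub>v ?x' \<in> carrier_vec k" by simp
      ultimately show False using dn by blast
    qed
    have "H *\<^sub>v ?x' = 0\<^sub>v n"
    proof (rule eq_vecI)
      fix i assume "i < dim_vec (0\<^sub>v n :: 'a vec)"
      then show "(H *\<^sub>v ?x') $ i = (0\<^sub>v n :: 'a vec) $ i" using comp xk by simp
    qed (use H in auto)
    then have "?x' = 0\<^sub>v k" using g x' by (simp add: good_def)
    then show "x = 0\<^sub>v (Suc k)"
    proof -
      assume a: "?x' = 0\<^sub>v k"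
      show ?thesis
      proof (rule eq_vecI)
        fix j assume "j < dim_vec (0\<^sub>v (Suc k) :: 'a vec)"
        then have j: "j < Suc k" by simp
        show "x $ j = (0\<^sub>v (Suc k) :: 'a vec) $ j"
        proof (cases "j < k")
          case True
          have "?x' $ j = (0\<^sub>v k :: 'a vec) $ j" using a by simp
          then show ?thesis using True by simp
        next
          case False
          then have "j = k" using j by simp
          then show ?thesis using xk by simp
        qed
      qed (use x in auto)
    qed
  qed
qed



lemma gen_mat_exists:
  fixes D :: "'a::{finite,field} vec set"
  assumes L: "linear_code n D"
  shows "\<exists>G. gen_mat n D G"
proof -
  define K where "K = {k. \<exists>H. good n D k H}"
  have g0: "good n D 0 (0\<^sub>m n 0)"
  proof -
    have a: "(0\<^sub>m n 0 :: 'a mat) *\<^sub>v x = 0\<^sub>v n" if "x \<in> carrier_vec 0" for x :: "'a vec"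
      using that by (intro eq_vecI) (auto simp: scalar_prod_def)
    have b: "x = 0\<^sub>v 0" if "x \<in> carrier_vec 0" for x :: "'a vec"
      using that by (intro eq_vecI) auto
    show ?thesis unfolding good_def using a b L by (simp add: linear_code_def)
  qed
  have K0: "0 \<in> K" using g0 K_def by blast
  have Kb: "K \<subseteq> {..n}" using good_bound K_def by auto
  have finK: "finite K" using Kb finite_subset by blast
  define k where "k = Max K"
  have "k \<in> K" using K0 finK k_def Max_in by blast
  then obtain H where g: "good n D k H" using K_def by blast
  have H: "H \<in> carrier_mat n k" using g by (simp add: good_def)
  have eqD: "D = {H *\<^sub>v x | x. x \<in> carrier_vec k}"
  proof
    show "{H *\<^sub>v x | x. x \<in> carrier_vec k} \<subseteq> D" using g by (auto simp: good_def)
    show "D \<subseteq> {H *\<^sub>v x | x. x \<in> carrier_vec k}"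
    proof (rule ccontr)
      assume "\<not> D \<subseteq> {H *\<^sub>v x | x. x \<in> carrier_vec k}"
      then obtain d where "d \<in> D" "d \<notin> {H *\<^sub>v x | x. x \<in> carrier_vec k}" by blast
      then have "good n D (Suc k) (ext_mat n k H d)" using good_extend[OF L g] by blast
      then have "Suc k \<in> K" using K_def by blast
      then have "Suc k \<le> k" using finK k_def Max_ge by blast
      then show False by simp
    qed
  qed
  have "gen_mat n D (transpose_mat H)"
    unfolding gen_mat_def using H eqD g by (auto simp: good_def)
  then show ?thesis by blast
qed




lemma mat_zero_vec:
  assumes "A \<in> carrier_mat nr nc"
  shows "A *\<^sub>v 0\<^sub>v nc = (0\<^sub>v nr :: 'a::comm_ring_1 vec)"
  using assms by (intro eq_vecI) auto

lemma gen_mat_carrier: "gen_mat n D G \<Longrightarrow> dim_row G = k \<Longrightarrow> G \<in> carrier_mat k n"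
  unfolding gen_mat_def by blast

lemma gen_mat_mem: "gen_mat n D G \<Longrightarrow> dim_row G = k \<Longrightarrow> x \<in> carrier_vec k \<Longrightarrow> transpose_mat G *\<^sub>v x \<in> D"
  unfolding gen_mat_def by blast

lemma gen_mat_obtain: "gen_mat n D G \<Longrightarrow> dim_row G = k \<Longrightarrow> c \<in> D \<Longrightarrow> \<exists>y. y \<in> carrier_vec k \<and> c = transpose_mat G *\<^sub>v y"
  unfolding gen_mat_def by blast

lemma gen_mat_inj: "gen_mat n D G \<Longrightarrow> dim_row G = k \<Longrightarrow> x \<in> carrier_vec k \<Longrightarrow> transpose_mat G *\<^sub>v x = 0\<^sub>v n \<Longrightarrow> x = 0\<^sub>v k"
  unfolding gen_mat_def by blast

lemma Pi_proj:
  fixes D :: "'a::{finite,field} vec set"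
  assumes L: "linear_code n D" and lcd: "D \<inter> dual_code n D = {0\<^sub>v n}"
  shows "M_LCD n (1\<^sub>m n) D" and "is_proj n D (Pi_mat n (1\<^sub>m n) D)"
proof -
  have key: "det (G * 1\<^sub>m n * transpose_mat G) \<noteq> 0" if G: "gen_mat n D G" for G
  proof
    assume det0: "det (G * 1\<^sub>m n * transpose_mat G) = 0"
    obtain k where kG: "dim_row G = k" by blast
    have Gc: "G \<in> carrier_mat k n" using gen_mat_carrier[OF G kG] .
    have GTc: "transpose_mat G \<in> carrier_mat n k" using Gc by simp
    have eqK: "G * 1\<^sub>m n * transpose_mat G = G * transpose_mat G" using Gc by simp
    have Kc: "G * transpose_mat G \<in> carrier_mat k k" using Gc by simp
    obtain v where v: "v \<in> carrier_vec k" "v \<noteq> 0\<^sub>v k" "(G * transpose_mat G) *\<^sub>v v = 0\<^sub>v k"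
      using det0 det_0_iff_vec_prod_zero[OF Kc] eqK by auto
    let ?h = "transpose_mat G *\<^sub>v v"
    have hD: "?h \<in> D" using gen_mat_mem[OF G kG v(1)] .
    have hc: "?h \<in> carrier_vec n" using GTc v(1) by simp
    have Gh: "G *\<^sub>v ?h = 0\<^sub>v k"
      using v(3) assoc_mult_mat_vec[OF Gc GTc v(1)] by simp
    have "?h \<in> dual_code n D"
    proof -
      have "?h \<bullet> c = 0" if c: "c \<in> D" for c
      proof -
        obtain y where y: "y \<in> carrier_vec k" "c = transpose_mat G *\<^sub>v y" using gen_mat_obtain[OF G kG c] by blast
        have cc: "c \<in> carrier_vec n" using c L lin_carrier by auto
        have "?h \<bullet> c = c \<bullet> ?h" using comm_scalar_prod[OF hc cc] .
        also have "\<dots> = y \<bullet> (G *\<^sub>v ?h)" using transpose_vec_mult_scalar[OF Gc hc y(1)] y(2) by simp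
        also have "\<dots> = 0" using Gh y(1) by simp
        finally show ?thesis .
      qed
      then show ?thesis using hc by (simp add: dual_code_def)
    qed
    then have "?h = 0\<^sub>v n" using hD lcd by auto
    then have "v = 0\<^sub>v k" using gen_mat_inj[OF G kG v(1)] by blast
    then show False using v(2) by simp
  qed
  have ex: "\<exists>G. gen_mat n D G \<and> det (G * 1\<^sub>m n * transpose_mat G) \<noteq> 0"
    using gen_mat_exists[OF L] key by blast
  then show "M_LCD n (1\<^sub>m n) D" by (simp add: M_LCD_def)
  define G where "G = (SOME G. gen_mat n D G \<and> det (G * 1\<^sub>m n * transpose_mat G) \<noteq> 0)"
  have G: "gen_mat n D G" and dG: "det (G * 1\<^sub>m n * transpose_mat G) \<noteq> 0"
    using someI_ex[OF ex] unfolding G_def by auto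
  obtain k where kG: "dim_row G = k" by blast
  have Gc: "G \<in> carrier_mat k n" using gen_mat_carrier[OF G kG] .
  have GTc: "transpose_mat G \<in> carrier_mat n k" using Gc by (simp only: transpose_carrier_mat)
  have eqK: "G * 1\<^sub>m n * transpose_mat G = G * transpose_mat G" by (simp only: right_mult_one_mat[OF Gc])
  have Kc: "G * transpose_mat G \<in> carrier_mat k k" by (rule mult_carrier_mat[OF Gc GTc])
  have dK: "det (G * transpose_mat G) \<noteq> 0" using dG unfolding eqK .
  have U: "G * transpose_mat G \<in> Units (ring_mat TYPE('a) k ())"
    by (rule det_non_zero_imp_unit[OF Kc dK])
  have "mat_inverse (G * transpose_mat G) \<noteq> None"
  proof
    assume "mat_inverse (G * transpose_mat G) = None"
    then have "G * transpose_mat G \<notin> Units (ring_mat TYPE('a) k ())"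
      by (rule mat_inverse(1)[OF Kc])
    then show False using U by contradiction
  qed
  then obtain B where B: "mat_inverse (G * transpose_mat G) = Some B" by blast
  have KB: "G * transpose_mat G * B = 1\<^sub>m k" and Bc: "B \<in> carrier_mat k k"
    using mat_inverse(2)[OF Kc B] by auto
  have Pi: "Pi_mat n (1\<^sub>m n) D = transpose_mat G * B * G"
    unfolding Pi_mat_def Let_def G_def[symmetric] eqK B option.sel left_mult_one_mat[OF GTc] ..
  have eq: "(transpose_mat G * B * G) *\<^sub>v u = transpose_mat G *\<^sub>v (B *\<^sub>v (G *\<^sub>v u))"
    if u: "u \<in> carrier_vec n" for u :: "'a vec"
  proof -
    have GB: "transpose_mat G * B \<in> carrier_mat n k" using mult_carrier_mat[OF GTc Bc] .
    have Gu: "G *\<^sub>v u \<in> carrier_vec k" using mult_mat_vec_carrier[OF Gc u] .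
    have "(transpose_mat G * B * G) *\<^sub>v u = (transpose_mat G * B) *\<^sub>v (G *\<^sub>v u)"
      using assoc_mult_mat_vec[OF GB Gc u] .
    also have "\<dots> = transpose_mat G *\<^sub>v (B *\<^sub>v (G *\<^sub>v u))"
      using assoc_mult_mat_vec[OF GTc Bc Gu] .
    finally show ?thesis .
  qed
  show "is_proj n D (Pi_mat n (1\<^sub>m n) D)" unfolding Pi is_proj_def
  proof (intro conjI ballI)
    show "transpose_mat G * B * G \<in> carrier_mat n n" using mult_carrier_mat[OF mult_carrier_mat[OF GTc Bc] Gc] .
    fix u :: "'a vec" assume u: "u \<in> carrier_vec n"
    have Gu: "G *\<^sub>v u \<in> carrier_vec k" using mult_mat_vec_carrier[OF Gc u] .
    have BGu: "B *\<^sub>v (G *\<^sub>v u) \<in> carrier_vec k" using mult_mat_vec_carrier[OF Bc Gu] .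
    have TBGu: "transpose_mat G *\<^sub>v (B *\<^sub>v (G *\<^sub>v u)) \<in> carrier_vec n" using mult_mat_vec_carrier[OF GTc BGu] .
    show "(transpose_mat G * B * G) *\<^sub>v u \<in> D" unfolding eq[OF u] using gen_mat_mem[OF G kG BGu] .
    let ?w = "u - (transpose_mat G * B * G) *\<^sub>v u"
    have wc: "?w \<in> carrier_vec n" unfolding eq[OF u] using minus_carrier_vec[OF u TBGu] .
    have Gw: "G *\<^sub>v ?w = 0\<^sub>v k"
    proof -
      have "G *\<^sub>v ?w = G *\<^sub>v u - G *\<^sub>v (transpose_mat G *\<^sub>v (B *\<^sub>v (G *\<^sub>v u)))"
        unfolding eq[OF u] by (rule mult_minus_distrib_mat_vec[OF Gc u TBGu])
      also have "G *\<^sub>v (transpose_mat G *\<^sub>v (B *\<^sub>v (G *\<^sub>v u))) = (G * transpose_mat G) *\<^sub>v (B *\<^sub>v (G *\<^sub>v u))"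
        using assoc_mult_mat_vec[OF Gc GTc BGu] by simp
      also have "\<dots> = (G * transpose_mat G * B) *\<^sub>v (G *\<^sub>v u)"
        using assoc_mult_mat_vec[OF Kc Bc Gu] by simp
      also have "\<dots> = G *\<^sub>v u" using KB Gu by simp
      finally show ?thesis using Gu by (intro eq_vecI) auto
    qed
    have "?w \<bullet> c = 0" if c: "c \<in> D" for c
    proof -
      obtain y where y: "y \<in> carrier_vec k" "c = transpose_mat G *\<^sub>v y" using gen_mat_obtain[OF G kG c] by blast
      have cc: "c \<in> carrier_vec n" using c L lin_carrier by auto
      have "?w \<bullet> c = c \<bullet> ?w" using comm_scalar_prod[OF wc cc] .
      also have "\<dots> = y \<bullet> (G *\<^sub>v ?w)" using transpose_vec_mult_scalar[OF Gc wc y(1)] y(2) by simp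
      also have "\<dots> = 0" using Gw y(1) by simp
      finally show ?thesis .
    qed
    then show "?w \<in> dual_code n D" using wc by (simp add: dual_code_def)
  qed
qed



lemma forward:
  fixes C :: "'a::{finite,field} vec set"
  assumes two: "(2::'a) = 0" and L: "linear_code n C"
    and G: "gen_mat n C G"
    and det: "det (G * (a \<cdot>\<^sub>m 1\<^sub>m n + b \<cdot>\<^sub>m mat n n (\<lambda>_. 1)) * transpose_mat G) \<noteq> 0"
  shows "C \<inter> dual_code n C = {0\<^sub>v n}"
proof
  let ?M = "a \<cdot>\<^sub>m 1\<^sub>m n + b \<cdot>\<^sub>m mat n n (\<lambda>_. 1) :: 'a mat"
  obtain k where kG: "dim_row G = k" by blast
  have Gc: "G \<in> carrier_mat k n" using gen_mat_carrier[OF G kG] .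
  have GTc: "transpose_mat G \<in> carrier_mat n k" using Gc by simp
  have Mc: "?M \<in> carrier_mat n n" by simp
  have Cc: "C \<subseteq> carrier_vec n" using L lin_carrier by auto
  have "\<forall>c\<in>C. 0\<^sub>v n \<bullet> c = 0" using Cc by auto
  then show "{0\<^sub>v n} \<subseteq> C \<inter> dual_code n C"
    using L by (auto simp: linear_code_def dual_code_def)
  show "C \<inter> dual_code n C \<subseteq> {0\<^sub>v n}"
  proof
    fix h assume h: "h \<in> C \<inter> dual_code n C"
    then have hC: "h \<in> C" and hd: "h \<in> dual_code n C" by auto
    have hc: "h \<in> carrier_vec n" using hC Cc by auto
    obtain x where x: "x \<in> carrier_vec k" "h = transpose_mat G *\<^sub>v x" using gen_mat_obtain[OF G kG hC] by blast
    have hh: "h \<bullet> h = 0" using hd hC by (simp add: dual_code_def)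
    have "(\<Sum>j\<in>{0..<n}. h $ j) * (\<Sum>j\<in>{0..<n}. h $ j) = 0"
      using hh hc sum_sq_char2[OF two, of "\<lambda>j. h $ j" "{0..<n}"] by (simp add: scalar_prod_def)
    then have s0: "(\<Sum>j\<in>{0..<n}. h $ j) = 0" by simp
    have Mh: "?M *\<^sub>v h = a \<cdot>\<^sub>v h"
    proof (rule eq_vecI)
      fix i assume "i < dim_vec (a \<cdot>\<^sub>v h)"
      then have i: "i < n" using hc by simp
      have "(?M *\<^sub>v h) $ i = (\<Sum>j\<in>{0..<n}. row ?M i $ j * h $ j)" using i hc by (simp add: scalar_prod_def)
      also have "\<dots> = (\<Sum>j\<in>{0..<n}. (if i = j then a * h $ j else 0) + b * h $ j)"
        using i by (intro sum.cong) (auto simp: algebra_simps)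
      also have "\<dots> = a * h $ i + b * (\<Sum>j\<in>{0..<n}. h $ j)" using i
        by (simp add: sum.distrib sum_distrib_left)
      also have "\<dots> = (a \<cdot>\<^sub>v h) $ i" using i hc s0 by simp
      finally show "(?M *\<^sub>v h) $ i = (a \<cdot>\<^sub>v h) $ i" .
    qed (use hc in simp)
    have Gh: "G *\<^sub>v h = 0\<^sub>v k"
    proof (rule eq_vecI)
      fix i assume "i < dim_vec (0\<^sub>v k :: 'a vec)"
      then have i: "i < k" by simp
      have ei: "unit_vec k i \<in> carrier_vec k" by simp
      have Ghc: "G *\<^sub>v h \<in> carrier_vec k" using Gc hc by simp
      have "(G *\<^sub>v h) $ i = unit_vec k i \<bullet> (G *\<^sub>v h)" using scalar_prod_left_unit[OF Ghc i] by simp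
      also have "\<dots> = (transpose_mat G *\<^sub>v unit_vec k i) \<bullet> h" using transpose_vec_mult_scalar[OF Gc hc ei] by simp
      also have "\<dots> = h \<bullet> (transpose_mat G *\<^sub>v unit_vec k i)"
        using comm_scalar_prod[OF _ hc, of "transpose_mat G *\<^sub>v unit_vec k i"] GTc ei by simp
      also have "\<dots> = 0"
      proof -
        have "transpose_mat G *\<^sub>v unit_vec k i \<in> C" using gen_mat_mem[OF G kG ei] .
        then show ?thesis using hd by (simp add: dual_code_def)
      qed
      finally show "(G *\<^sub>v h) $ i = (0\<^sub>v k :: 'a vec) $ i" using i by simp
    qed (simp add: kG)
    have GM: "G * ?M \<in> carrier_mat k n" using Gc Mc by simp
    have "(G * ?M * transpose_mat G) *\<^sub>v x = (G * ?M) *\<^sub>v h"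
      using assoc_mult_mat_vec[OF GM GTc x(1)] x(2) by simp
    also have "\<dots> = G *\<^sub>v (?M *\<^sub>v h)" using assoc_mult_mat_vec[OF Gc Mc hc] .
    also have "\<dots> = G *\<^sub>v (a \<cdot>\<^sub>v h)" using Mh by simp
    also have "\<dots> = a \<cdot>\<^sub>v (G *\<^sub>v h)" using mult_mat_vec[OF Gc hc] .
    also have "\<dots> = 0\<^sub>v k" using Gh by (intro eq_vecI) auto
    finally have z: "(G * ?M * transpose_mat G) *\<^sub>v x = 0\<^sub>v k" .
    have Kc: "G * ?M * transpose_mat G \<in> carrier_mat k k" using mult_carrier_mat[OF GM GTc] .
    have "x = 0\<^sub>v k" using det det_0_iff_vec_prod_zero[OF Kc] x(1) z by blast
    then show "h \<in> {0\<^sub>v n}" using x(2) mat_zero_vec[OF GTc] by simp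
  qed
qed




theorem mainTheorem5:
  fixes C :: "'a::{finite,field} vec set" and n m :: nat
  assumes "card (UNIV :: 'a set) = 2 ^ m"
    and "linear_code n C"
  shows "GI_reducible n C \<longleftrightarrow> C \<inter> dual_code n C = {0\<^sub>v n}"
proof
  have two: "(2::'a) = 0" using char2[OF assms(1)] .
  have L: "linear_code n C" using assms(2) .
  assume "GI_reducible n C"
  then obtain a b where M_all: "\<forall>P. perm_mat n P \<longrightarrow> M_LCD n (a \<cdot>\<^sub>m 1\<^sub>m n + b \<cdot>\<^sub>m mat n n (\<lambda>_. 1)) (code_perm C P)"
    unfolding GI_reducible_def Let_def by blast
  then have "M_LCD n (a \<cdot>\<^sub>m 1\<^sub>m n + b \<cdot>\<^sub>m mat n n (\<lambda>_. 1)) (code_perm C (1\<^sub>m n))"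
    using perm_id[of n] by blast
  then have "M_LCD n (a \<cdot>\<^sub>m 1\<^sub>m n + b \<cdot>\<^sub>m mat n n (\<lambda>_. 1)) C" unfolding code_perm_id[OF L] .
  then obtain G where G: "gen_mat n C G"
    and d: "det (G * (a \<cdot>\<^sub>m 1\<^sub>m n + b \<cdot>\<^sub>m mat n n (\<lambda>_. 1)) * transpose_mat G) \<noteq> 0"
    unfolding M_LCD_def by blast
  show "C \<inter> dual_code n C = {0\<^sub>v n}" using forward[OF two L G d] .
next
  have L: "linear_code n C" using assms(2) .
  assume lcd: "C \<inter> dual_code n C = {0\<^sub>v n}"
  have M: "(1::'a) \<cdot>\<^sub>m 1\<^sub>m n + 0 \<cdot>\<^sub>m mat n n (\<lambda>_. 1) = 1\<^sub>m n" by (rule eq_matI) auto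
  have LP: "linear_code n (code_perm C P)" if "perm_mat n P" for P
    using code_perm_linear[OF that L] .
  have lcdP: "code_perm C P \<inter> dual_code n (code_perm C P) = {0\<^sub>v n}" if "perm_mat n P" for P
    using code_perm_lcd[OF that L lcd] .
  have part1: "\<forall>P. perm_mat n P \<longrightarrow> M_LCD n (1\<^sub>m n) (code_perm C P)"
    using Pi_proj(1)[OF LP lcdP] by blast
  have part2: "\<forall>C1 C2. C1 \<in> {code_perm C P | P. perm_mat n P} \<longrightarrow> C2 \<in> {code_perm C P | P. perm_mat n P} \<longrightarrow>
          (code_equiv n C1 C2 \<longleftrightarrow> mat_equiv n (Pi_mat n (1\<^sub>m n) C1) (Pi_mat n (1\<^sub>m n) C2))"
  proof (intro allI impI)
    fix C1 C2 assume c1: "C1 \<in> {code_perm C P | P. perm_mat n P}" and c2: "C2 \<in> {code_perm C P | P. perm_mat n P}"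
    obtain P1 where P1: "perm_mat n P1" "C1 = code_perm C P1" using c1 by blast
    obtain P2 where P2: "perm_mat n P2" "C2 = code_perm C P2" using c2 by blast
    have L1: "linear_code n C1" using LP[OF P1(1)] P1(2) by simp
    have lcd1: "C1 \<inter> dual_code n C1 = {0\<^sub>v n}" using lcdP[OF P1(1)] P1(2) by simp
    have L2: "linear_code n C2" using LP[OF P2(1)] P2(2) by simp
    have lcd2: "C2 \<inter> dual_code n C2 = {0\<^sub>v n}" using lcdP[OF P2(1)] P2(2) by simp
    have pr1: "is_proj n C1 (Pi_mat n (1\<^sub>m n) C1)" using Pi_proj(2)[OF L1 lcd1] .
    have pr2: "is_proj n C2 (Pi_mat n (1\<^sub>m n) C2)" using Pi_proj(2)[OF L2 lcd2] .
    show "code_equiv n C1 C2 \<longleftrightarrow> mat_equiv n (Pi_mat n (1\<^sub>m n) C1) (Pi_mat n (1\<^sub>m n) C2)"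
    proof
      assume "code_equiv n C1 C2"
      then obtain P where P: "perm_mat n P" "C2 = code_perm C1 P" unfolding code_equiv_def by blast
      have "is_proj n C2 (transpose_mat P * Pi_mat n (1\<^sub>m n) C1 * P)"
        using proj_perm[OF P(1) L1 pr1] P(2) by simp
      then have "Pi_mat n (1\<^sub>m n) C2 = transpose_mat P * Pi_mat n (1\<^sub>m n) C1 * P"
        using proj_unique[OF L2 lcd2 pr2] by blast
      then show "mat_equiv n (Pi_mat n (1\<^sub>m n) C1) (Pi_mat n (1\<^sub>m n) C2)"
        unfolding mat_equiv_def using P(1) by blast
    next
      assume "mat_equiv n (Pi_mat n (1\<^sub>m n) C1) (Pi_mat n (1\<^sub>m n) C2)"
      then obtain P where P: "perm_mat n P" "Pi_mat n (1\<^sub>m n) C2 = transpose_mat P * Pi_mat n (1\<^sub>m n) C1 * P"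
        unfolding mat_equiv_def by blast
      have pr: "is_proj n (code_perm C1 P) (Pi_mat n (1\<^sub>m n) C2)"
        using proj_perm[OF P(1) L1 pr1] P(2) by simp
      have "code_perm C1 P = {Pi_mat n (1\<^sub>m n) C2 *\<^sub>v u | u. u \<in> carrier_vec n}"
        using proj_range[OF code_perm_linear[OF P(1) L1] code_perm_lcd[OF P(1) L1 lcd1] pr] .
      also have "\<dots> = C2" using proj_range[OF L2 lcd2 pr2] by simp
      finally show "code_equiv n C1 C2" unfolding code_equiv_def using P(1) by blast
    qed
  qed
  have all: "(1::'a) \<noteq> 0 \<and> (1::'a) + of_nat n * 0 \<noteq> 0 \<and>
     ((\<forall>P. perm_mat n P \<longrightarrow> M_LCD n ((1::'a) \<cdot>\<^sub>m 1\<^sub>m n + 0 \<cdot>\<^sub>m mat n n (\<lambda>_. 1)) (code_perm C P)) \<and>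
       (\<forall>C1 C2. C1 \<in> {code_perm C P | P. perm_mat n P} \<longrightarrow> C2 \<in> {code_perm C P | P. perm_mat n P} \<longrightarrow>
          (code_equiv n C1 C2 \<longleftrightarrow> mat_equiv n (Pi_mat n ((1::'a) \<cdot>\<^sub>m 1\<^sub>m n + 0 \<cdot>\<^sub>m mat n n (\<lambda>_. 1)) C1)
              (Pi_mat n ((1::'a) \<cdot>\<^sub>m 1\<^sub>m n + 0 \<cdot>\<^sub>m mat n n (\<lambda>_. 1)) C2))))"
    unfolding M using part1 part2 by simp
  show "GI_reducible n C" unfolding GI_reducible_def Let_def
    by (rule exI[of _ 1], rule exI[of _ 0], rule all)
qed



end
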